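(* Let $n\ge 2$, and let $L=(\ell_1,\dots,\ell_n)\in\mathbb{R}^n$ and $K=(k_1,\dots,k_n)\in\mathbb{R}^n$ satisfy $0<k_i<\ell_i$ for all $1\le i\le n$. Let $\Lambda\subset\mathbb{R}^n$ be the lattice generated by the rows of the $n\times n$ matrix $$\mathbf{G}=\begin{bmatrix} \ell_1 & -k_2 & 0 & \cdots & 0 & 0\\ 0 & \ell_2 & -k_3 & \cdots & 0 & 0\\ \vdots & & \ddots & \ddots & & \vdots\\ 0 & 0 & \cdots & \ell_{n-2} & -k_{n-1} & 0\\ 0 & 0 & \cdots & 0 & \ell_{n-1} & -k_n\\ -k_1 & 0 & \cdots & 0 & 0 & \ell_n \end{bmatrix},$$ i.e. row $i$ ($1\le i\le n-1$) has $\ell_i$ in column $i$ and $-k_{i+1}$ in column $i+1$, and row $n$ has $-k_1$ in column $1$ and $\ell_n$ in column $n$, all other entries being $0$. Then $\Lambda$ is a lattice tiling of $\mathbb{R}^n$ with $\mathcal{S}_{L,K}$.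
   Context: For $L,K\in\mathbb{R}^n$ with $0<k_i<\ell_i$, the $n$-dimensional chair is $\mathcal{S}_{L,K}=\{(x_1,\dots,x_n)\in\mathbb{R}^n: 0\le x_i<\ell_i \text{ for all } i, \text{ and there exists } j \text{ with } x_j<\ell_j-k_j\}$. For a set $\mathcal{S}\subset\mathbb{R}^n$ and $U\in\mathbb{R}^n$, $U+\mathcal{S}=\{U+X: X\in\mathcal{S}\}$. A set $P\subseteq\mathbb{R}^n$ is a packing of $\mathbb{R}^n$ with $\mathcal{S}$ if the translates $X+\mathcal{S}$, $X\in P$, have pairwise non-intersecting interiors; it is a tiling if moreover the union of the closures of these translates is $\mathbb{R}^n$. A lattice is the set of all integer linear combinations of $n$ linearly independent vectors of $\mathbb{R}^n$ (its basis); a lattice $\Lambda$ is a lattice tiling with $\mathcal{S}$ if its point set is a tiling with $\mathcal{S}$. *)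

theory Defs
  imports "HOL-Analysis.Analysis"
begin

definition chair :: "real^'n \<Rightarrow> real^'n \<Rightarrow> (real^'n) set" where
  "chair L K = {x. (\<forall>i. 0 \<le> x$i \<and> x$i < L$i) \<and> (\<exists>j. x$j < L$j - K$j)}"

definition translate :: "'a::ab_group_add \<Rightarrow> 'a set \<Rightarrow> 'a set" where
  "translate U S = (\<lambda>X. U + X) ` S"

definition is_packing :: "(real^'n) set \<Rightarrow> (real^'n) set \<Rightarrow> bool" where
  "is_packing S P \<longleftrightarrow> (\<forall>X\<in>P. \<forall>Y\<in>P. X \<noteq> Y \<longrightarrow>
      interior (translate X S) \<inter> interior (translate Y S) = {})"

definition is_tiling :: "(real^'n) set \<Rightarrow> (real^'n) set \<Rightarrow> bool" where
  "is_tiling S P \<longleftrightarrow> is_packing S P \<and> (\<Union>X\<in>P. closure (translate X S)) = UNIV"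

definition lattice_gen :: "('n::finite \<Rightarrow> real^'n) \<Rightarrow> (real^'n) set" where
  "lattice_gen B = {(\<Sum>i\<in>UNIV. of_int (c i) *\<^sub>R B i) | c. True}"

definition is_lattice_tiling :: "(real^'n) set \<Rightarrow> ('n::finite \<Rightarrow> real^'n) \<Rightarrow> bool" where
  "is_lattice_tiling S B \<longleftrightarrow> inj B \<and> independent (range B) \<and> is_tiling S (lattice_gen B)"

text \<open>Coordinates are labelled 1..n via an enumeration e (e 0 = coordinate 1, ...).
  cyc_succ e j is the cyclically next coordinate.\<close>
definition cyc_succ :: "(nat \<Rightarrow> 'n::finite) \<Rightarrow> 'n \<Rightarrow> 'n" where
  "cyc_succ e j = e ((inv_into {..<CARD('n)} e j + 1) mod CARD('n))"

definition G_row :: "(nat \<Rightarrow> 'n::finite) \<Rightarrow> real^'n \<Rightarrow> real^'n \<Rightarrow> 'n \<Rightarrow> real^'n" where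
  "G_row e L K j = (\<chi> c. if c = j then L$j else if c = cyc_succ e j then - K$c else 0)"

end

theory Submission
  imports Defs
begin


fun chn :: "(nat \<Rightarrow> real) \<Rightarrow> (nat \<Rightarrow> real) \<Rightarrow> (nat \<Rightarrow> real) \<Rightarrow> int \<Rightarrow> nat \<Rightarrow> int" where
  "chn a b z t 0 = t"
| "chn a b z t (Suc k) = floor ((z k + of_int (chn a b z t k) * b k) / a k)"

fun Bu :: "(nat \<Rightarrow> real) \<Rightarrow> (nat \<Rightarrow> real) \<Rightarrow> (nat \<Rightarrow> real) \<Rightarrow> nat \<Rightarrow> real" where
  "Bu a b z 0 = 0"
| "Bu a b z (Suc k) = (z k + Bu a b z k * b k) / a k"

fun Bl :: "(nat \<Rightarrow> real) \<Rightarrow> (nat \<Rightarrow> real) \<Rightarrow> (nat \<Rightarrow> real) \<Rightarrow> nat \<Rightarrow> real" where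
  "Bl a b z 0 = 0"
| "Bl a b z (Suc k) = (z k + Bl a b z k * b k) / a k - 1"

definition Aseq :: "(nat \<Rightarrow> real) \<Rightarrow> (nat \<Rightarrow> real) \<Rightarrow> nat \<Rightarrow> real" where
  "Aseq a b k = (\<Prod>i<k. b i / a i)"

lemma floor_bounds:
  assumes "a > 0"
  shows "of_int \<lfloor>w/a\<rfloor> * a \<le> w \<and> w < (of_int \<lfloor>w/a\<rfloor> + 1) * a"
proof -
  have h1: "of_int \<lfloor>w/a\<rfloor> \<le> w/a" and h2: "w/a < of_int \<lfloor>w/a\<rfloor> + 1" by linarith+
  have "of_int \<lfloor>w/a\<rfloor> * a \<le> w" using pos_le_divide_eq[OF assms, of "of_int \<lfloor>w/a\<rfloor>" w] h1 by blast
  moreover have "w < (of_int \<lfloor>w/a\<rfloor> + 1) * a" using pos_divide_less_eq[OF assms, of w "of_int \<lfloor>w/a\<rfloor> + 1"] h2 by blast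
  ultimately show ?thesis by blast
qed

lemma discrete_ivt:
  fixes g :: "int \<Rightarrow> int"
  shows "g x \<ge> 0 \<Longrightarrow> g (x + int d) < 0 \<Longrightarrow> \<exists>t. g t \<ge> 0 \<and> g (t+1) < 0"
proof (induction d arbitrary: x)
  case 0 then show ?case by simp
next
  case (Suc d)
  show ?case
  proof (cases "g (x+1) < 0")
    case True then show ?thesis using Suc by blast
  next
    case False
    then show ?thesis using Suc.IH[of "x+1"] Suc.prems by (simp add: add.assoc)
  qed
qed

context
  fixes a b z :: "nat \<Rightarrow> real"
  assumes ab: "\<And>k. 0 < b k \<and> b k < a k"
begin

lemma chn_step: "chn a b z t k \<le> chn a b z (t+1) k \<and> chn a b z (t+1) k \<le> chn a b z t k + 1"
proof (induction k)
  case 0 then show ?case by simp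
next
  case (Suc k)
  let ?p = "chn a b z t k" and ?q = "chn a b z (t+1) k"
  have a0: "a k > 0" "b k > 0" "b k < a k" using ab[of k] by auto
  have m1: "z k + of_int ?p * b k \<le> z k + of_int ?q * b k"
    using Suc a0 by (simp add: mult_right_mono)
  have m2: "z k + of_int ?q * b k \<le> (z k + of_int ?p * b k) + a k"
  proof -
    have "of_int ?q * b k \<le> (of_int ?p + 1) * b k" using Suc a0 by (simp add: mult_right_mono)
    thus ?thesis using a0 by (simp add: algebra_simps)
  qed
  have f1: "\<lfloor>(z k + of_int ?p * b k) / a k\<rfloor> \<le> \<lfloor>(z k + of_int ?q * b k) / a k\<rfloor>"
    using m1 a0 by (intro floor_mono divide_right_mono) auto
  have "(z k + of_int ?q * b k) / a k \<le> (z k + of_int ?p * b k) / a k + 1"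
    using m2 a0 by (simp add: divide_le_eq algebra_simps add_divide_distrib)
  hence f2: "\<lfloor>(z k + of_int ?q * b k) / a k\<rfloor> \<le> \<lfloor>(z k + of_int ?p * b k) / a k\<rfloor> + 1"
    by (metis floor_add_int floor_mono of_int_1)
  show ?case using f1 f2 by simp
qed

lemma chn_all_up:
  assumes "\<forall>k<n. z k + of_int (chn a b z t k) * b k - of_int (chn a b z t (Suc k)) * a k \<ge> a k - b k"
  shows "k \<le> n \<Longrightarrow> chn a b z (t+1) k = chn a b z t k + 1"
proof (induction k)
  case 0 then show ?case by simp
next
  case (Suc k)
  let ?p = "chn a b z t k" and ?r = "chn a b z t (Suc k)"
  have a0: "a k > 0" "b k > 0" "b k < a k" using ab[of k] by auto
  have IH: "chn a b z (t+1) k = ?p + 1" using Suc by simp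
  have h: "z k + of_int ?p * b k - of_int ?r * a k \<ge> a k - b k" using assms Suc by auto
  have fb: "of_int ?r * a k \<le> z k + of_int ?p * b k \<and> z k + of_int ?p * b k < (of_int ?r + 1) * a k"
    using floor_bounds[OF a0(1), of "z k + of_int ?p * b k"] by simp
  let ?w = "z k + of_int (?p + 1) * b k"
  have "(of_int ?r + 1) * a k \<le> ?w" using h by (simp add: algebra_simps)
  hence l: "of_int ?r + 1 \<le> ?w / a k" using a0 by (simp add: pos_le_divide_eq)
  have "?w < (of_int ?r + 2) * a k" using fb a0 by (simp add: algebra_simps)
  hence u: "?w / a k < of_int ?r + 2" using a0 by (simp add: pos_divide_less_eq)
  have "\<lfloor>?w / a k\<rfloor> = ?r + 1"
    using l u by linarith
  thus ?case using IH by simp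
qed

lemma Aseq_bounds: "0 < Aseq a b k \<and> Aseq a b k \<le> 1"
proof (induction k)
  case 0 then show ?case by (simp add: Aseq_def)
next
  case (Suc k)
  have a0: "a k > 0" "b k > 0" "b k < a k" using ab[of k] by auto
  have "Aseq a b (Suc k) = Aseq a b k * (b k / a k)" by (simp add: Aseq_def)
  moreover have "0 < b k / a k" "b k / a k \<le> 1" using a0 by auto
  ultimately show ?case using Suc by (metis mult_le_one mult_pos_pos less_imp_le)
qed

lemma Aseq_lt: "n \<ge> 1 \<Longrightarrow> Aseq a b n < 1"
proof -
  assume "n \<ge> 1"
  then obtain m where m: "n = Suc m" by (cases n) auto
  have a0: "a m > 0" "b m > 0" "b m < a m" using ab[of m] by auto
  have "Aseq a b n = Aseq a b m * (b m / a m)" by (simp add: Aseq_def m)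
  moreover have "b m / a m < 1" using a0 by auto
  moreover have "Aseq a b m * (b m / a m) \<le> 1 * (b m / a m)"
    using Aseq_bounds[of m] a0 by (intro mult_right_mono) auto
  ultimately show ?thesis by linarith
qed

lemma chn_upper: "of_int (chn a b z t k) \<le> Aseq a b k * of_int t + Bu a b z k"
proof (induction k)
  case 0 then show ?case by (simp add: Aseq_def)
next
  case (Suc k)
  have a0: "a k > 0" "b k > 0" "b k < a k" using ab[of k] by auto
  have "of_int (chn a b z t (Suc k)) \<le> (z k + of_int (chn a b z t k) * b k) / a k" by simp
  also have "\<dots> \<le> (z k + (Aseq a b k * of_int t + Bu a b z k) * b k) / a k"
    using Suc a0 by (intro divide_right_mono add_left_mono mult_right_mono) auto
  also have "\<dots> = Aseq a b (Suc k) * of_int t + Bu a b z (Suc k)"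
    using a0 by (simp add: Aseq_def field_simps)
  finally show ?case .
qed

lemma chn_lower: "of_int (chn a b z t k) \<ge> Aseq a b k * of_int t + Bl a b z k"
proof (induction k)
  case 0 then show ?case by (simp add: Aseq_def)
next
  case (Suc k)
  have a0: "a k > 0" "b k > 0" "b k < a k" using ab[of k] by auto
  have "Aseq a b (Suc k) * of_int t + Bl a b z (Suc k) = (z k + (Aseq a b k * of_int t + Bl a b z k) * b k) / a k - 1"
    using a0 by (simp add: Aseq_def field_simps)
  also have "\<dots> \<le> (z k + of_int (chn a b z t k) * b k) / a k - 1"
    using Suc a0 by (intro diff_right_mono divide_right_mono add_left_mono mult_right_mono) auto
  also have "\<dots> \<le> of_int (chn a b z t (Suc k))" by simp
  finally show ?case .
qed

lemma chn_fix:
  assumes "n \<ge> 1"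
  shows "\<exists>t. chn a b z t n = t \<and> chn a b z (t+1) n = t"
proof -
  define \<rho> where "\<rho> = Aseq a b n"
  have r: "0 < \<rho>" "\<rho> < 1" using Aseq_bounds Aseq_lt assms \<rho>_def by auto
  define g where "g t = chn a b z t n - t" for t
  define bb where "bb = \<lceil>Bu a b z n / (1 - \<rho>)\<rceil> + 1"
  define aa where "aa = min \<lfloor>Bl a b z n / (1 - \<rho>)\<rfloor> bb"
  have "Bu a b z n / (1 - \<rho>) < of_int bb" unfolding bb_def by linarith
  hence "Bu a b z n < (1 - \<rho>) * of_int bb" using r by (simp add: pos_divide_less_eq mult.commute)
  hence "real_of_int (chn a b z bb n) < of_int bb" using chn_upper[of bb n] \<rho>_def by (simp add: algebra_simps)
  hence gb: "g bb < 0" unfolding g_def by simp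
  have "of_int aa \<le> Bl a b z n / (1 - \<rho>)" unfolding aa_def by linarith
  hence "(1 - \<rho>) * of_int aa \<le> Bl a b z n" using r by (simp add: pos_le_divide_eq mult.commute)
  hence "real_of_int aa \<le> of_int (chn a b z aa n)" using chn_lower[where t=aa and k=n] \<rho>_def by (simp add: algebra_simps)
  hence ga: "g aa \<ge> 0" unfolding g_def by simp
  have "aa \<le> bb" unfolding aa_def by simp
  hence "bb = aa + int (nat (bb - aa))" by simp
  then obtain t where t: "g t \<ge> 0" "g (t+1) < 0" using discrete_ivt[where g=g and x=aa and d="nat (bb - aa)"] ga gb by metis
  have "chn a b z t n \<le> chn a b z (t+1) n" "chn a b z (t+1) n \<le> chn a b z t n + 1" using chn_step by auto
  hence "chn a b z t n = t \<and> chn a b z (t+1) n = t" using t unfolding g_def by linarith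
  thus ?thesis by blast
qed

end

lemma local_step:
  fixes p q :: int and kv lv :: real
  assumes "0 < kv" "kv < lv" "\<bar>of_int q * lv - of_int p * kv\<bar> < lv" "p \<ge> 0"
  shows "0 \<le> q \<and> q \<le> p"
proof -
  have "of_int p * kv \<le> of_int p * lv" using assms by (simp add: mult_left_mono)
  hence "of_int q * lv < (of_int p + 1) * lv" using assms by (simp add: algebra_simps abs_less_iff)
  hence "of_int q < of_int p + (1::real)" using assms by (simp add: mult_less_cancel_right)
  hence 1: "q \<le> p" by linarith
  have "0 \<le> of_int p * kv" using assms by simp
  moreover have "-lv < of_int q * lv - of_int p * kv" using assms(3) by (auto simp: abs_less_iff)
  ultimately have h: "(-1) * lv < of_int q * lv" by linarith
  have "0 \<le> q"
  proof (rule ccontr)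
    assume "\<not> 0 \<le> q"
    hence "real_of_int q \<le> -1" by linarith
    hence "of_int q * lv \<le> (-1) * lv" using assms(1,2) by (intro mult_right_mono) auto
    thus False using h by linarith
  qed
  thus ?thesis using 1 by simp
qed



context
  fixes L K :: "real^'n" and e :: "nat \<Rightarrow> 'n"
  assumes n2: "CARD('n) \<ge> 2" and bij: "bij_betw e {..<CARD('n)} UNIV"
    and KL: "\<forall>i. 0 < K$i \<and> K$i < L$i"
begin

lemma e_inv: "k < CARD('n) \<Longrightarrow> inv_into {..<CARD('n)} e (e k) = k"
  using bij by (simp add: bij_betw_def inv_into_f_f)

lemma succ_e: "k < CARD('n) \<Longrightarrow> cyc_succ e (e k) = e (Suc k mod CARD('n))"
  by (simp add: cyc_succ_def e_inv)

lemma e_surj: "\<exists>k<CARD('n). e k = j"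
  using bij by (metis UNIV_I bij_betw_iff_bijections lessThan_iff)

lemma e_inj: "k < CARD('n) \<Longrightarrow> k' < CARD('n) \<Longrightarrow> e k = e k' \<Longrightarrow> k = k'"
  using bij by (meson bij_betw_def inj_onD lessThan_iff)

lemma Suc_mod_n: "k < CARD('n) \<Longrightarrow> Suc k mod CARD('n) = (if Suc k = CARD('n) then 0 else Suc k)"
  by (cases "Suc k = CARD('n)") auto

lemma inj_succ: "inj (cyc_succ e)"
proof (rule injI)
  fix x y assume h: "cyc_succ e x = cyc_succ e y"
  obtain k where k: "k < CARD('n)" "e k = x" using e_surj by blast
  obtain k' where k': "k' < CARD('n)" "e k' = y" using e_surj by blast
  have "Suc k mod CARD('n) = Suc k' mod CARD('n)"
    using h k k' succ_e e_inj by (metis mod_less_divisor zero_less_card_finite)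
  hence "k = k'" using k(1) k'(1) Suc_mod_n[of k] Suc_mod_n[of k'] by (auto split: if_splits)
  thus "x = y" using k k' by simp
qed

lemma succ_neq: "cyc_succ e j \<noteq> j"
proof
  assume h: "cyc_succ e j = j"
  obtain k where k: "k < CARD('n)" "e k = j" using e_surj by blast
  have "Suc k mod CARD('n) = k"
    using h k succ_e e_inj by (metis mod_less_divisor zero_less_card_finite)
  thus False using n2 k(1) Suc_mod_n[of k] by (auto split: if_splits)
qed

lemma coord:
  "(\<Sum>i\<in>UNIV. u i *\<^sub>R G_row e L K i) $ (cyc_succ e i0)
     = u (cyc_succ e i0) * L$(cyc_succ e i0) - u i0 * K$(cyc_succ e i0)"
proof -
  let ?j = "cyc_succ e i0"
  have "\<And>i. u i * (G_row e L K i $ ?j) = (if i = ?j then u ?j * L$?j else 0) + (if i = i0 then - u i0 * K$?j else 0)"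
    using succ_neq[of i0] inj_succ by (auto simp: G_row_def inj_eq)
  hence "(\<Sum>i\<in>UNIV. u i *\<^sub>R G_row e L K i) $ ?j = (\<Sum>i\<in>UNIV. (if i = ?j then u ?j * L$?j else 0) + (if i = i0 then - u i0 * K$?j else 0))"
    by simp
  also have "\<dots> = u ?j * L$?j - u i0 * K$?j" by (simp add: sum.distrib)
  finally show ?thesis .
qed


lemma succ_surj: "\<exists>i. cyc_succ e i = j"
  using inj_succ finite_UNIV_inj_surj[of "cyc_succ e"] by (metis finite surjD)

lemma KLj: "0 < K$j" "K$j < L$j" using KL by auto

lemma uniq_aux:
  fixes c c' :: "'n \<Rightarrow> int"
  defines "X \<equiv> (\<Sum>i\<in>UNIV. of_int (c i) *\<^sub>R G_row e L K i)"
    and "Y \<equiv> (\<Sum>i\<in>UNIV. of_int (c' i) *\<^sub>R G_row e L K i)"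
  assumes x: "z - X \<in> chair L K" and y: "z - Y \<in> chair L K" and c0: "c (e 0) \<le> c' (e 0)"
  shows "c = c'"
proof -
  define d where "d j = c' j - c j" for j
  have diff: "(z - X)$(cyc_succ e i) - (z - Y)$(cyc_succ e i)
      = of_int (d (cyc_succ e i)) * L$(cyc_succ e i) - of_int (d i) * K$(cyc_succ e i)" for i
    unfolding X_def Y_def d_def using coord[of "\<lambda>i. of_int (c i)" i] coord[of "\<lambda>i. of_int (c' i)" i]
    by (simp add: algebra_simps)
  have bx: "0 \<le> (z - X)$j \<and> (z - X)$j < L$j" for j using x by (auto simp: chair_def)
  have by': "0 \<le> (z - Y)$j \<and> (z - Y)$j < L$j" for j using y by (auto simp: chair_def)
  have loc: "d i \<ge> 0 \<Longrightarrow> 0 \<le> d (cyc_succ e i) \<and> d (cyc_succ e i) \<le> d i" for i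
  proof -
    assume "d i \<ge> 0"
    moreover have "\<bar>of_int (d (cyc_succ e i)) * L$(cyc_succ e i) - of_int (d i) * K$(cyc_succ e i)\<bar> < L$(cyc_succ e i)"
      using diff[of i] bx[of "cyc_succ e i"] by'[of "cyc_succ e i"] by (simp add: abs_less_iff)
    ultimately show ?thesis using local_step KLj by blast
  qed
  let ?n = "CARD('n)"
  define D where "D k = d (e k)" for k
  have D0: "D 0 \<ge> 0" using c0 by (simp add: D_def d_def)
  have mono: "k < ?n \<Longrightarrow> 0 \<le> D k \<and> (\<forall>m\<le>k. D k \<le> D m)" for k
  proof (induction k)
    case 0 then show ?case using D0 by simp
  next
    case (Suc k)
    have "cyc_succ e (e k) = e (Suc k)" using Suc.prems succ_e[of k] by simp
    hence "0 \<le> D (Suc k) \<and> D (Suc k) \<le> D k" using loc[of "e k"] Suc by (simp add: D_def)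
    thus ?case using Suc by (auto simp: le_Suc_eq)
  qed
  have n1: "?n - 1 < ?n" "Suc (?n - 1) mod ?n = 0" using n2 by auto
  have "cyc_succ e (e (?n - 1)) = e 0" using succ_e[OF n1(1)] n1(2) by simp
  hence cl: "D 0 \<le> D (?n - 1)" using loc[of "e (?n - 1)"] mono[OF n1(1)] by (simp add: D_def)
  have allD: "D k = D 0" if k: "k < ?n" for k
  proof -
    have a: "D k \<le> D 0" using mono[OF k] by auto
    have b: "D (?n - 1) \<le> D k" using mono[OF n1(1)] k by auto
    show ?thesis using a b cl by linarith
  qed
  have alld: "d j = D 0" for j
  proof -
    obtain k where k: "k < ?n" "e k = j" using e_surj[of j] by blast
    have "D k = D 0" using allD[OF k(1)] .
    thus ?thesis using k(2) unfolding D_def by simp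
  qed
  show ?thesis
  proof (cases "D 0 = 0")
    case True then show ?thesis using alld by (auto simp: d_def fun_eq_iff)
  next
    case False
    hence m1: "D 0 \<ge> 1" using D0 by simp
    obtain j0 where j0: "(z - X)$j0 < L$j0 - K$j0" using x by (auto simp: chair_def)
    obtain i where i: "cyc_succ e i = j0" using succ_surj by blast
    have "(z - X)$j0 - (z - Y)$j0 = of_int (D 0) * (L$j0 - K$j0)"
      using diff[of i] i alld by (simp add: algebra_simps)
    moreover have "of_int (D 0) * (L$j0 - K$j0) \<ge> 1 * (L$j0 - K$j0)"
      using m1 KLj[of j0] by (intro mult_right_mono) auto
    ultimately show ?thesis using j0 by'[of j0] by simp
  qed
qed

lemma exist_aux:
  "\<exists>c :: 'n \<Rightarrow> int. z - (\<Sum>i\<in>UNIV. of_int (c i) *\<^sub>R G_row e L K i) \<in> chair L K"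
proof -
  let ?n = "CARD('n)"
  define a where "a k = L$(e k)" for k
  define b where "b k = K$(e k)" for k
  define zz where "zz k = z$(e k)" for k
  have ab: "\<And>k. 0 < b k \<and> b k < a k" using KL by (simp add: a_def b_def)
  obtain t where t: "chn a b zz t ?n = t" "chn a b zz (t+1) ?n = t"
    using chn_fix[where a=a and b=b and z=zz and n="?n"] ab n2 by auto
  define c where "c j = chn a b zz t (Suc (inv_into {..<?n} e j))" for j
  have ce: "k < ?n \<Longrightarrow> c (e k) = chn a b zz t (Suc k)" for k by (simp add: c_def e_inv)
  have pred: "k < ?n \<Longrightarrow> \<exists>i. cyc_succ e i = e k \<and> c i = chn a b zz t k" for k
  proof (cases k)
    case 0
    have n1: "?n - 1 < ?n" "Suc (?n - 1) mod ?n = 0" using n2 by auto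
    have "cyc_succ e (e (?n - 1)) = e 0" using succ_e[OF n1(1)] n1(2) by simp
    moreover have "c (e (?n - 1)) = chn a b zz t 0" using ce[OF n1(1)] n1 t(1) by simp
    ultimately show ?thesis using 0 by blast
  next
    case (Suc k')
    assume "k < ?n"
    hence "cyc_succ e (e k') = e k" "c (e k') = chn a b zz t k" using Suc succ_e[of k'] ce[of k'] by auto
    thus ?thesis by blast
  qed
  define X where "X = (\<Sum>i\<in>UNIV. of_int (c i) *\<^sub>R G_row e L K i)"
  have xc: "k < ?n \<Longrightarrow> (z - X)$(e k) = zz k + of_int (chn a b zz t k) * b k - of_int (chn a b zz t (Suc k)) * a k" for k
  proof -
    assume k: "k < ?n"
    obtain i where i: "cyc_succ e i = e k" "c i = chn a b zz t k" using pred[OF k] by blast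
    have "X $ (e k) = of_int (c (e k)) * L$(e k) - of_int (c i) * K$(e k)"
      unfolding X_def using coord[of "\<lambda>i. of_int (c i)" i] i by simp
    thus ?thesis using ce[OF k] i by (simp add: zz_def a_def b_def)
  qed
  have box: "0 \<le> (z - X)$(e k) \<and> (z - X)$(e k) < a k" if k: "k < ?n" for k
  proof -
    have a0: "a k > 0" using ab[of k] by linarith
    show ?thesis using xc[OF k] floor_bounds[OF a0, of "zz k + of_int (chn a b zz t k) * b k"]
      by (simp add: algebra_simps)
  qed
  have "\<exists>j. (z - X)$j < L$j - K$j"
  proof (rule ccontr)
    assume "\<not> ?thesis"
    hence nl: "\<And>j. L$j - K$j \<le> (z - X)$j" by (simp add: not_less)
    have "\<forall>k<?n. zz k + of_int (chn a b zz t k) * b k - of_int (chn a b zz t (Suc k)) * a k \<ge> a k - b k"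
    proof (intro allI impI)
      fix k assume k: "k < ?n"
      show "zz k + of_int (chn a b zz t k) * b k - of_int (chn a b zz t (Suc k)) * a k \<ge> a k - b k"
        using nl[of "e k"] xc[OF k] unfolding a_def b_def by (simp only:)
    qed
    hence "chn a b zz (t+1) ?n = chn a b zz t ?n + 1" using chn_all_up[where a=a and b=b and z=zz and n="?n" and t=t and k="?n"] ab order_refl by blast
    thus False using t by simp
  qed
  moreover have "\<forall>j. 0 \<le> (z - X)$j \<and> (z - X)$j < L$j"
  proof
    fix j obtain k where "k < ?n" "e k = j" using e_surj by blast
    thus "0 \<le> (z - X)$j \<and> (z - X)$j < L$j" using box by (auto simp: a_def)
  qed
  ultimately have "z - X \<in> chair L K" by (simp add: chair_def)
  thus ?thesis unfolding X_def by blast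
qed

lemma inj_G: "inj (G_row e L K)"
proof (rule injI)
  fix i i' assume h: "G_row e L K i = G_row e L K i'"
  show "i = i'"
  proof (rule ccontr)
    assume ne: "i \<noteq> i'"
    have "G_row e L K i $ i = L$i" by (simp add: G_row_def)
    moreover have "G_row e L K i' $ i \<noteq> L$i" using ne KLj[of i] by (auto simp: G_row_def)
    ultimately show False using h by simp
  qed
qed

lemma indep_G: "independent (range (G_row e L K))"
proof (rule real_vector.independent_if_scalars_zero)
  show "finite (range (G_row e L K))" by simp
next
  fix f x assume s: "(\<Sum>x\<in>range (G_row e L K). f x *\<^sub>R x) = 0" and x: "x \<in> range (G_row e L K)"
  define u where "u i = f (G_row e L K i)" for i
  have "(\<Sum>i\<in>UNIV. u i *\<^sub>R G_row e L K i) = 0"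
    using s sum.reindex[OF inj_G, of "\<lambda>x. f x *\<^sub>R x"] by (simp add: u_def o_def)
  hence eq: "u (cyc_succ e i) * L$(cyc_succ e i) = u i * K$(cyc_succ e i)" for i
    using coord[of u i] by simp
  define M where "M = Max (range (\<lambda>i. \<bar>u i\<bar>))"
  have Mge: "\<bar>u i\<bar> \<le> M" for i unfolding M_def by (rule Max_ge) auto
  have "M \<in> range (\<lambda>i. \<bar>u i\<bar>)" unfolding M_def by (rule Max_in) auto
  then obtain j where j: "\<bar>u j\<bar> = M" by auto
  obtain i where i: "cyc_succ e i = j" using succ_surj by blast
  have LKa: "\<bar>L$j\<bar> = L$j" "\<bar>K$j\<bar> = K$j" using KLj[of j] by auto
  have "\<bar>u j * L$j\<bar> = \<bar>u i * K$j\<bar>" using eq[of i] i by simp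
  hence "\<bar>u j\<bar> * L$j = \<bar>u i\<bar> * K$j" by (simp only: abs_mult LKa)
  also have "\<dots> \<le> M * K$j" using Mge[of i] KLj[of j] by (intro mult_right_mono) auto
  finally have "M * L$j \<le> M * K$j" using j by simp
  hence "M \<le> 0" using KLj[of j] j
    by (metis abs_ge_zero mult_le_cancel_left_pos not_less order.strict_iff_not order_le_less_trans)
  hence "\<And>i. u i = 0" using Mge by (meson abs_le_zero_iff order_trans)
  thus "f x = 0" using x by (auto simp: u_def)
qed

end

lemma translate_mem: "z \<in> translate X S \<longleftrightarrow> z - X \<in> S"
  unfolding translate_def by (auto simp: image_iff intro!: bexI[of _ "z - X"])

theorem mainTheorem1:
  fixes L K :: "real^'n" and e :: "nat \<Rightarrow> 'n"
  assumes "CARD('n) \<ge> 2"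
    and "bij_betw e {..<CARD('n)} UNIV"
    and "\<forall>i. 0 < K$i \<and> K$i < L$i"
  shows "is_lattice_tiling (chair L K) (G_row e L K)"
proof -
  note U = uniq_aux[OF assms] and E = exist_aux[OF assms]
  have pack: "is_packing (chair L K) (lattice_gen (G_row e L K))"
    unfolding is_packing_def
  proof (intro ballI impI)
    fix X Y assume X: "X \<in> lattice_gen (G_row e L K)" and Y: "Y \<in> lattice_gen (G_row e L K)" and ne: "X \<noteq> Y"
    obtain c where c: "X = (\<Sum>i\<in>UNIV. of_int (c i) *\<^sub>R G_row e L K i)" using X by (auto simp: lattice_gen_def)
    obtain c' where c': "Y = (\<Sum>i\<in>UNIV. of_int (c' i) *\<^sub>R G_row e L K i)" using Y by (auto simp: lattice_gen_def)
    have "translate X (chair L K) \<inter> translate Y (chair L K) = {}"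
    proof (rule ccontr)
      assume "\<not> ?thesis"
      then obtain z where "z - X \<in> chair L K" "z - Y \<in> chair L K" by (auto simp: translate_mem)
      hence "c = c'" using U[of z c c'] U[of z c' c] c c' by (cases "c (e 0) \<le> c' (e 0)") auto
      thus False using ne c c' by simp
    qed
    thus "interior (translate X (chair L K)) \<inter> interior (translate Y (chair L K)) = {}"
      using interior_subset by blast
  qed
  have cover: "(\<Union>X\<in>lattice_gen (G_row e L K). closure (translate X (chair L K))) = UNIV"
  proof -
    have "z \<in> (\<Union>X\<in>lattice_gen (G_row e L K). closure (translate X (chair L K)))" for z
    proof -
      obtain c where "z - (\<Sum>i\<in>UNIV. of_int (c i) *\<^sub>R G_row e L K i) \<in> chair L K" using E by blast
      hence "z \<in> closure (translate (\<Sum>i\<in>UNIV. of_int (c i) *\<^sub>R G_row e L K i) (chair L K))"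
        using closure_subset translate_mem by blast
      moreover have "(\<Sum>i\<in>UNIV. of_int (c i) *\<^sub>R G_row e L K i) \<in> lattice_gen (G_row e L K)"
        by (auto simp: lattice_gen_def)
      ultimately show ?thesis by blast
    qed
    thus ?thesis by blast
  qed
  show ?thesis unfolding is_lattice_tiling_def is_tiling_def
    using inj_G[OF assms] indep_G[OF assms] pack cover by blast
qed

end
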